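(* Let $p\ge5$ be prime and $m\ge2$ an integer. Then the polynomial $$f_p=1+\sum_{k=0}^{(p-1)/2}(-1)^k\frac{p}{p-k}\binom{p-k}{k}m^kZ^{p-2k}\in\mathbb{Z}[Z]$$ is irreducible in $\mathbb{Q}[Z]$.
   Context: This polynomial equals $\sqrt m^{\,p}F_p(Z/\sqrt m)+1$ where $F_p(Z)=2T_p(Z/2)$ with $T_p$ the Chebyshev polynomial of the first kind; it is the De Moivre polynomial $f_p(Z,d,R)$ with $d=-1/(2m^{(p-1)/2})$, $R=(1-4m^p)/(4m^{p-1})$ (so $D=d^2-R=m$). *)

theory Defs
  imports "HOL-Computational_Algebra.Polynomial"
begin

definition fpoly :: "nat \<Rightarrow> int \<Rightarrow> rat poly" where
  "fpoly p m = 1 + (\<Sum>k = 0..(p - 1) div 2.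
      monom ((-1) ^ k * (of_nat p / of_nat (p - k)) * of_nat ((p - k) choose k) * (of_int m) ^ k)
            (p - 2 * k))"

end

theory Submission
  imports Defs "HOL-Computational_Algebra.Fundamental_Theorem_Algebra"
begin

definition TT :: "'a::comm_ring_1 \<Rightarrow> 'a \<Rightarrow> nat \<Rightarrow> nat \<Rightarrow> 'a" where
  "TT s m n k = (-1)^k * of_nat ((n - k) choose k) * m^k * s^(n - 2*k)"

definition hh :: "'a::comm_ring_1 \<Rightarrow> 'a \<Rightarrow> nat \<Rightarrow> 'a" where
  "hh s m n = (\<Sum>k\<le>n. TT s m n k)"

lemma TT_zero: "n < 2*k \<Longrightarrow> TT s m n k = 0"
  unfolding TT_def by (simp add: binomial_eq_0)

lemma TT_rec: "TT s m (Suc (Suc n)) (Suc k) = s * TT s m (Suc n) (Suc k) - m * TT s m n k"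
proof (cases "k \<le> n")
  case True
  have pas: "((Suc n - k) choose (Suc k)) = ((n - k) choose (Suc k)) + ((n - k) choose k)"
    using True by (simp add: Suc_diff_le)
  show ?thesis
  proof (cases "2*k+1 \<le> n")
    case True2: True
    obtain j where j1: "n - 2*k = Suc j" and j2: "Suc n - 2 * Suc k = j" and j3: "Suc (Suc n) - 2 * Suc k = Suc j"
      using True2 by (intro that[of "n - 2*k - 1"]) auto
    show ?thesis unfolding TT_def diff_Suc_Suc pas of_nat_add j1 j2 j3
      by (simp add: algebra_simps)
  next
    case False
    hence z: "((n - k) choose (Suc k)) = 0" by (simp add: binomial_eq_0)
    show ?thesis unfolding TT_def diff_Suc_Suc pas z
      by (simp add: algebra_simps)
  qed
next
  case False
  thus ?thesis unfolding TT_def by (simp add: binomial_eq_0)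
qed

lemma hh_0: "hh s m 0 = 1" by (simp add: hh_def TT_def)
lemma hh_1: "hh s m (Suc 0) = s" by (simp add: hh_def TT_def)

lemma hh_rec: "hh s m (Suc (Suc n)) = s * hh s m (Suc n) - m * hh s m n"
proof -
  have 1: "hh s m (Suc (Suc n)) = TT s m (Suc (Suc n)) 0 + (\<Sum>k\<le>Suc n. TT s m (Suc (Suc n)) (Suc k))"
    unfolding hh_def by (subst sum.atMost_Suc_shift) simp
  have 2: "(\<Sum>k\<le>Suc n. TT s m (Suc (Suc n)) (Suc k)) = (\<Sum>k\<le>Suc n. s * TT s m (Suc n) (Suc k)) - (\<Sum>k\<le>Suc n. m * TT s m n k)"
    by (simp add: TT_rec sum_subtractf)
  have 3: "(\<Sum>k\<le>Suc n. m * TT s m n k) = m * hh s m n"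
    by (simp add: hh_def sum_distrib_left TT_zero)
  have 4: "TT s m (Suc (Suc n)) 0 = s * TT s m (Suc n) 0" by (simp add: TT_def)
  have 5: "s * TT s m (Suc n) 0 + (\<Sum>k\<le>Suc n. s * TT s m (Suc n) (Suc k)) = s * hh s m (Suc n)"
    unfolding hh_def by (subst (2) sum.atMost_Suc_shift) (simp add: sum_distrib_left ring_distribs TT_zero)
  show ?thesis unfolding 1 2 3 4 using 5 by (simp add: algebra_simps)
qed

lemma pow_sum_hh: "x^(Suc (Suc n)) + y^(Suc (Suc n)) = hh (x+y) (x*y) (Suc (Suc n)) - (x*y) * hh (x+y) (x*y) n
   \<and> x^(Suc (Suc (Suc n))) + y^(Suc (Suc (Suc n))) = hh (x+y) (x*y) (Suc (Suc (Suc n))) - (x*y) * hh (x+y) (x*y) (Suc n)"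
  for x y :: "'a::comm_ring_1"
proof (induction n)
  case 0
  show ?case by (simp add: hh_rec hh_0 hh_1 numeral_eq_Suc) (simp add: algebra_simps power2_eq_square)
next
  case (Suc n)
  let ?s = "x+y" and ?m = "x*y"
  have r1: "hh ?s ?m (Suc (Suc (Suc (Suc n)))) = ?s * hh ?s ?m (Suc (Suc (Suc n))) - ?m * hh ?s ?m (Suc (Suc n))"
    by (rule hh_rec)
  have r2: "hh ?s ?m (Suc (Suc n)) = ?s * hh ?s ?m (Suc n) - ?m * hh ?s ?m n"
    by (rule hh_rec)
  have p: "x^(Suc (Suc (Suc (Suc n)))) + y^(Suc (Suc (Suc (Suc n)))) = ?s * (x^(Suc (Suc (Suc n))) + y^(Suc (Suc (Suc n)))) - ?m * (x^(Suc (Suc n)) + y^(Suc (Suc n)))"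
    by (simp add: algebra_simps)
  from Suc.IH have IH1: "x^(Suc (Suc (Suc n))) + y^(Suc (Suc (Suc n))) = hh ?s ?m (Suc (Suc (Suc n))) - ?m * hh ?s ?m (Suc n)"
    and IH2: "x^(Suc (Suc n)) + y^(Suc (Suc n)) = hh ?s ?m (Suc (Suc n)) - ?m * hh ?s ?m n" by blast+
  have "x^(Suc (Suc (Suc (Suc n)))) + y^(Suc (Suc (Suc (Suc n)))) = hh ?s ?m (Suc (Suc (Suc (Suc n)))) - ?m * hh ?s ?m (Suc (Suc n))"
    unfolding p IH1 IH2 r1 r2 by (simp add: algebra_simps)
  with Suc.IH show ?case by simp
qed

lemma hh_half: "hh s m n = (\<Sum>k\<le>n div 2. TT s m n k)"
  unfolding hh_def
  by (rule sum.mono_neutral_right) (auto intro!: TT_zero)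

definition cc :: "nat \<Rightarrow> nat \<Rightarrow> nat" where
  "cc n k = (if k = 0 then 1 else ((n - k) choose k) + ((n - k - 1) choose (k - 1)))"

lemma dickson:
  fixes x y :: "'a::comm_ring_1"
  assumes "n \<ge> 2"
  shows "(\<Sum>k\<le>n div 2. (-1)^k * of_nat (cc n k) * (x*y)^k * (x+y)^(n - 2*k)) = x^n + y^n"
proof -
  obtain n' where n: "n = Suc (Suc n')" using assms by (metis add_2_eq_Suc le_Suc_ex)
  let ?s = "x+y" and ?m = "x*y"
  define f where "f k = (if k = 0 then 0 else (-1)^k * of_nat ((n - k - 1) choose (k - 1)) * ?m^k * ?s^(n - 2*k))" for k
  have split: "(\<Sum>k\<le>n div 2. (-1)^k * of_nat (cc n k) * ?m^k * ?s^(n - 2*k)) = (\<Sum>k\<le>n div 2. TT ?s ?m n k) + (\<Sum>k\<le>n div 2. f k)"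
    unfolding sum.distrib[symmetric] by (rule sum.cong) (auto simp: cc_def TT_def f_def algebra_simps)
  have nd: "n div 2 = Suc (n' div 2)" using n by simp
  have "(\<Sum>k\<le>n div 2. f k) = (\<Sum>j\<le>n' div 2. f (Suc j))"
    unfolding nd by (subst sum.atMost_Suc_shift) (simp add: f_def)
  also have "\<dots> = (\<Sum>j\<le>n' div 2. - ?m * TT ?s ?m n' j)"
    by (rule sum.cong) (auto simp: f_def TT_def n algebra_simps)
  also have "\<dots> = - ?m * hh ?s ?m n'" by (simp add: hh_half sum_distrib_left)
  finally have "(\<Sum>k\<le>n div 2. f k) = - ?m * hh ?s ?m n'" .
  note fin = this
  have e: "x^n + y^n = hh ?s ?m n - ?m * hh ?s ?m n'"
    using conjunct1[OF pow_sum_hh[of x n' y]] unfolding n[symmetric] .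
  show ?thesis unfolding split fin e hh_half[symmetric] by simp
qed

lemma cc_mult: assumes "k \<le> p" shows "(p - k) * cc p k = p * ((p - k) choose k)"
proof (cases "k = 0")
  case True thus ?thesis by (simp add: cc_def)
next
  case False
  have "k * ((p - k) choose k) = (p - k) * ((p - k - 1) choose (k - 1))"
    using False times_binomial_minus1_eq[of k "p - k"] by simp
  hence "(p - k) * cc p k = (p - k) * ((p - k) choose k) + k * ((p - k) choose k)"
    using False by (simp add: cc_def algebra_simps)
  also have "\<dots> = p * ((p - k) choose k)" using assms by (simp add: algebra_simps)
  finally show ?thesis .
qed

lemma cc_rat: assumes "k < p"
  shows "(of_nat p / of_nat (p - k) * of_nat ((p - k) choose k) :: 'a::field_char_0) = of_nat (cc p k)"
proof -
  have "(of_nat (p - k) :: 'a) * of_nat (cc p k) = of_nat p * of_nat ((p - k) choose k)"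
    using cc_mult[of k p] assms by (metis of_nat_mult less_imp_le)
  moreover have "(of_nat (p - k) :: 'a) \<noteq> 0" using assms by simp
  ultimately show ?thesis by (simp add: field_simps)
qed

lemma cc_dvd: assumes "prime p" "0 < k" "k < p" shows "p dvd cc p k"
proof -
  have "p dvd (p - k) * cc p k" using cc_mult[of k p] assms by simp
  moreover have "\<not> p dvd (p - k)" using assms by (simp add: nat_dvd_not_less)
  ultimately show ?thesis using assms(1) prime_dvd_mult_iff by blast
qed

lemma cc_1: "p \<ge> 2 \<Longrightarrow> cc p 1 = p" by (simp add: cc_def)

definition fv :: "nat \<Rightarrow> int \<Rightarrow> 'a::field_char_0 \<Rightarrow> 'a" where
  "fv p m x = 1 + (\<Sum>k\<le>(p - 1) div 2. (-1)^k * of_nat (cc p k) * (of_int m)^k * x^(p - 2*k))"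

lemma mp_add: "map_poly (of_rat :: rat \<Rightarrow> 'a::field_char_0) (a + b) = map_poly of_rat a + map_poly of_rat b"
  by (intro poly_eqI) (simp add: coeff_map_poly of_rat_add)

lemma mp_sum: "map_poly (of_rat :: rat \<Rightarrow> 'a::field_char_0) (\<Sum>i\<in>A. f i) = (\<Sum>i\<in>A. map_poly of_rat (f i))"
  by (induction A rule: infinite_finite_induct) (simp_all add: mp_add)

lemma mp_mult: "map_poly (of_rat :: rat \<Rightarrow> 'a::field_char_0) (a * b) = map_poly of_rat a * map_poly of_rat b"
  by (intro poly_eqI) (simp add: coeff_map_poly coeff_mult of_rat_sum of_rat_mult)

lemma poly_fpoly: assumes "odd p"
  shows "poly (map_poly (of_rat :: rat \<Rightarrow> 'a::field_char_0) (fpoly p m)) z = fv p m z"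
proof -
  have "map_poly (of_rat :: rat \<Rightarrow> 'a) (fpoly p m) = 1 + (\<Sum>k = 0..(p - 1) div 2.
      monom (of_rat ((-1) ^ k * (of_nat p / of_nat (p - k)) * of_nat ((p - k) choose k) * (of_int m) ^ k)) (p - 2 * k))"
    unfolding fpoly_def mp_add mp_sum by (simp add: map_poly_monom)
  hence "poly (map_poly (of_rat :: rat \<Rightarrow> 'a) (fpoly p m)) z = 1 + (\<Sum>k = 0..(p - 1) div 2.
      of_rat ((-1) ^ k * (of_nat p / of_nat (p - k)) * of_nat ((p - k) choose k) * (of_int m) ^ k) * z^(p - 2 * k))"
    by (simp add: poly_sum poly_monom)
  also have "\<dots> = fv p m z" unfolding fv_def atLeast0AtMost
  proof (intro arg_cong2[where f="(+)"] refl sum.cong)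
    fix k assume "k \<in> {..(p - 1) div 2}"
    hence "k \<le> p - 1" using div_le_dividend[of "p - 1" 2] by (simp del: div_le_dividend)
    hence k: "k < p" using assms odd_pos by fastforce
    have "of_rat ((-1) ^ k * (of_nat p / of_nat (p - k)) * of_nat ((p - k) choose k) * (of_int m) ^ k) =
        (of_rat ((-1) ^ k * (of_nat (cc p k)) * (of_int m) ^ k) :: 'a)"
    proof -
      have e: "(-1) ^ k * (of_nat p / of_nat (p - k)) * of_nat ((p - k) choose k) * (of_int m) ^ k =
         (-1) ^ k * (of_nat p / of_nat (p - k) * of_nat ((p - k) choose k)) * ((of_int m) ^ k :: rat)"
        by (simp only: mult.assoc)
      show ?thesis unfolding e cc_rat[OF k] ..
    qed
    also have "\<dots> = (-1)^k * of_nat (cc p k) * (of_int m)^k"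
      by (simp add: of_rat_mult of_rat_power)
    finally show "of_rat ((-1) ^ k * (of_nat p / of_nat (p - k)) * of_nat ((p - k) choose k) * (of_int m) ^ k) * z^(p - 2 * k) =
        (-1)^k * of_nat (cc p k) * (of_int m)^k * z^(p - 2*k)" by simp
  qed
  finally show ?thesis .
qed

lemma poly_fpoly_rat: assumes "odd p" shows "poly (fpoly p m) t = fv p m t"
proof -
  have "poly (map_poly (of_rat::rat\<Rightarrow>rat) (fpoly p m)) t = fv p m t" by (rule poly_fpoly[OF assms])
  thus ?thesis by simp
qed

lemma fv_dickson:
  fixes x y :: "'a::field_char_0"
  assumes "odd p" "p \<ge> 3" "x * y = of_int m"
  shows "fv p m (x + y) = 1 + x^p + y^p"
proof -
  have d: "(p - 1) div 2 = p div 2" using assms by (auto elim!: oddE)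
  show ?thesis unfolding fv_def d using dickson[of p x y] assms by (simp add: mult.commute add.assoc)
qed

definition ee :: "nat \<Rightarrow> int \<Rightarrow> nat \<Rightarrow> int" where
  "ee p m k = (-1)^k * int (cc p k) * m^k"

lemma fv_int: "fv p m (of_int a :: 'a::field_char_0) = of_int (1 + (\<Sum>k\<le>(p - 1) div 2. ee p m k * a^(p - 2*k)))"
  unfolding fv_def ee_def by (simp add: of_int_sum)

lemma fv_ratfrac:
  fixes a b :: int assumes "b \<noteq> 0" "odd p"
  shows "(of_int b)^p * fv p m (of_int a / of_int b :: rat) = of_int (b^p + (\<Sum>k\<le>(p - 1) div 2. ee p m k * a^(p - 2*k) * b^(2*k)))"
proof -
  have "(of_int b::rat)^p * fv p m (of_int a / of_int b :: rat) = (of_int b)^p + (\<Sum>k\<le>(p - 1) div 2. (of_int b)^p * (of_int (ee p m k) * (of_int a / of_int b)^(p - 2*k)))"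
    unfolding fv_def ee_def by (simp add: sum_distrib_left ring_distribs mult.assoc)
  also have "(\<Sum>k\<le>(p - 1) div 2. (of_int b::rat)^p * (of_int (ee p m k) * (of_int a / of_int b)^(p - 2*k))) =
     (\<Sum>k\<le>(p - 1) div 2. of_int (ee p m k * a^(p - 2*k) * b^(2*k)))"
  proof (rule sum.cong[OF refl])
    fix k assume "k \<in> {..(p - 1) div 2}"
    hence "2*k \<le> p" by auto
    hence pp: "(of_int b::rat)^p = of_int b^(p - 2*k) * of_int b^(2*k)" by (simp flip: power_add)
    show "(of_int b::rat)^p * (of_int (ee p m k) * (of_int a / of_int b)^(p - 2*k)) = of_int (ee p m k * a^(p - 2*k) * b^(2*k))"
      unfolding pp using assms by (simp add: power_divide field_simps)
  qed
  finally show ?thesis by simp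
qed

lemma N_ge: assumes "(p::nat) \<ge> 5" shows "(p - 1) div 2 \<ge> 2" using assms by auto

lemma odd_p: "prime (p::nat) \<Longrightarrow> p \<ge> 5 \<Longrightarrow> odd p"
  using prime_odd_nat by fastforce

lemma ee0: "ee p m 0 = 1" by (simp add: ee_def cc_def)

lemma sum_split0: "(\<Sum>k\<le>N. f k) = f 0 + (\<Sum>k\<in>{1..N}. f k)" for f :: "nat \<Rightarrow> int"
  by (simp add: atMost_atLeast0 sum.atLeast_Suc_atMost)

lemma fv_nonzero:
  fixes t :: rat
  assumes p: "prime p" "p \<ge> 5" and m: "m \<ge> 2"
  shows "fv p m t \<noteq> 0"
proof
  assume t0: "fv p m t = 0"
  have op: "odd p" using odd_p p by blast
  define N where "N = (p - 1) div 2"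
  have N2: "N \<ge> 2" using N_ge p unfolding N_def by blast
  have Np: "2 * N < p" using op p unfolding N_def by (auto elim!: oddE)
  obtain a b where ab: "quotient_of t = (a, b)" by (cases "quotient_of t")
  have b0: "b > 0" using ab quotient_of_denom_pos by blast
  have cop: "coprime a b" using ab quotient_of_coprime by blast
  have tab: "t = of_int a / of_int b" using ab quotient_of_div by blast
  have eq0: "b^p + (\<Sum>k\<le>N. ee p m k * a^(p - 2*k) * b^(2*k)) = 0"
  proof -
    have "of_int b ^ p * fv p m (of_int a / of_int b :: rat) = 0" using t0 tab by simp
    hence "(of_int (b^p + (\<Sum>k\<le>(p - 1) div 2. ee p m k * a^(p - 2*k) * b^(2*k))) :: rat) = 0"
      using fv_ratfrac[of b p m a] b0 op by simp
    thus ?thesis unfolding N_def of_int_eq_0_iff .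
  qed
  have "b dvd b^p + (\<Sum>k\<in>{1..N}. ee p m k * a^(p - 2*k) * b^(2*k))"
    using op odd_pos by (intro dvd_add dvd_sum) (auto intro: dvd_power)
  moreover have "a^p + (b^p + (\<Sum>k\<in>{1..N}. ee p m k * a^(p - 2*k) * b^(2*k))) = 0"
    using eq0 unfolding sum_split0[of _ N] by (simp add: ee0)
  ultimately have "b dvd a^p" by (metis add_eq_0_iff dvd_minus_iff)
  moreover have "coprime b (a^p)" using cop by (simp add: coprime_commute)
  ultimately have "is_unit b" using coprime_absorb_left by blast
  hence b1: "b = 1" using b0 by auto
  hence ta: "t = of_int a" using tab by simp
  have eqa: "1 + (\<Sum>k\<le>N. ee p m k * a^(p - 2*k)) = 0"
    using t0 unfolding ta fv_int of_int_eq_0_iff N_def .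
  have "a dvd (\<Sum>k\<le>N. ee p m k * a^(p - 2*k))"
    using Np by (intro dvd_sum) (auto intro!: dvd_mult dvd_power)
  hence "a dvd 1" using eqa by (metis add_eq_0_iff2 dvd_minus_iff)
  hence a1: "a = 1 \<or> a = -1" by auto
  have pdvd: "int p dvd ee p m k" if "k \<in> {1..N}" for k
  proof -
    have "p dvd cc p k" using cc_dvd[of p k] p that Np by auto
    thus ?thesis unfolding ee_def by simp
  qed
  show False using a1
  proof
    assume "a = 1"
    hence "1 + (1 + (\<Sum>k\<in>{1..N}. ee p m k)) = 0" using eqa unfolding sum_split0[of _ N] by (simp add: ee0)
    moreover have "int p dvd (\<Sum>k\<in>{1..N}. ee p m k)" using pdvd by (intro dvd_sum) auto
    ultimately have "int p dvd 2" by (metis add.assoc add_eq_0_iff2 dvd_minus_iff one_add_one)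
    hence "p dvd 2" by (metis int_dvd_int_iff of_nat_numeral)
    hence "p \<le> 2" by (rule dvd_imp_le) simp
    thus False using p by simp
  next
    assume "a = -1"
    have ev: "(-1::int)^(p - 2*k) = -1" if "k \<in> {..N}" for k
    proof -
      have "odd (p - 2*k)" using that op Np by (auto simp: even_diff_nat)
      thus ?thesis by (simp add: neg_one_odd_power)
    qed
    have "1 - (\<Sum>k\<le>N. ee p m k) = 0"
      using eqa \<open>a = -1\<close> ev by (simp add: sum_negf)
    hence S0: "(\<Sum>k\<in>{1..N}. ee p m k) = 0" unfolding sum_split0[of _ N] by (simp add: ee0)
    have c1: "cc p (Suc 0) = p" using p by (simp add: cc_def)
    have e1: "ee p m 1 = - (int p * m)" by (simp add: ee_def c1)
    have "{1..N} = insert 1 {2..N}" using N2 by auto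
    hence S1: "(\<Sum>k\<in>{2..N}. ee p m k) = int p * m" using S0 e1 by simp
    have m2: "m^2 dvd ee p m k" if "k \<in> {2..N}" for k
      using that unfolding ee_def by (intro dvd_mult le_imp_power_dvd) auto
    hence "m^2 dvd int p * m" unfolding S1[symmetric] by (intro dvd_sum) auto
    hence "m dvd int p" using m by (simp add: power2_eq_square)
    hence "m = int p"
    proof -
      assume md: "m dvd int p"
      have mm: "m = int (nat m)" using m by simp
      have "nat m dvd p" using md by (subst (asm) mm) (simp only: int_dvd_int_iff)
      hence "nat m = 1 \<or> nat m = p" using p(1) unfolding prime_nat_iff by blast
      thus ?thesis using m by auto
    qed
    have p3: "int p ^ 3 dvd ee p m k" if "k \<in> {2..N}" for k
    proof -
      have "p dvd cc p k" using cc_dvd[of p k] p that Np by auto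
      hence "int p dvd (-1)^k * int (cc p k)" by (intro dvd_mult) simp
      moreover have "int p^2 dvd m^k" unfolding \<open>m = int p\<close> using that by (intro le_imp_power_dvd) auto
      ultimately have "int p * int p^2 dvd ((-1)^k * int (cc p k)) * m^k" by (rule mult_dvd_mono)
      thus ?thesis unfolding ee_def by (simp add: power_numeral_reduce)
    qed
    hence "int p^3 dvd int p * m" unfolding S1[symmetric] by (intro dvd_sum) auto
    hence "int p^3 dvd int p^2" using \<open>m = int p\<close> by (simp add: power2_eq_square)
    moreover have "int p^2 > 0" using p by simp
    ultimately have "int p^3 \<le> int p^2" by (rule zdvd_imp_le)
    moreover have "int p^3 = int p^2 * int p" by (simp add: power3_eq_cube power2_eq_square)
    ultimately have "int p^2 * int p \<le> int p^2 * 1" by simp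
    hence "int p \<le> 1" using \<open>int p^2 > 0\<close> by (simp only: mult_le_cancel_left_pos)
    thus False using p by simp
  qed
qed

lemma cof: "(of_rat r :: complex) = complex_of_real (of_rat r)"
  by (cases r) (simp add: of_rat_rat of_real_divide)

locale qK =
  fixes al :: complex and M :: rat
  assumes al_eq: "al^2 + al + of_rat M = 0" and al_nr: "Im al \<noteq> 0"
begin

definition inK :: "complex \<Rightarrow> bool" where
  "inK z \<longleftrightarrow> (\<exists>a b. z = of_rat a + of_rat b * al)"

lemma inK_rat[simp]: "inK (of_rat a)"
  unfolding inK_def by (rule exI[of _ a], rule exI[of _ 0]) simp

lemma inK_0[simp]: "inK 0" using inK_rat[of 0] by simp
lemma inK_1[simp]: "inK 1" using inK_rat[of 1] by simp
lemma inK_of_int[simp]: "inK (of_int n)" using inK_rat[of "of_int n"] by simp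
lemma inK_of_nat[simp]: "inK (of_nat n)" using inK_rat[of "of_nat n"] by simp

lemma inK_al[simp]: "inK al"
  unfolding inK_def by (rule exI[of _ 0], rule exI[of _ 1]) simp

lemma inK_add[simp]: "inK x \<Longrightarrow> inK y \<Longrightarrow> inK (x + y)"
  unfolding inK_def
  by (elim exE, rename_tac a b c d, rule_tac x="a+c" in exI, rule_tac x="b+d" in exI) (simp add: of_rat_add algebra_simps)

lemma inK_uminus[simp]: "inK x \<Longrightarrow> inK (- x)"
  unfolding inK_def
  by (elim exE, rename_tac a b, rule_tac x="-a" in exI, rule_tac x="-b" in exI) (simp add: of_rat_minus)

lemma inK_diff[simp]: "inK x \<Longrightarrow> inK y \<Longrightarrow> inK (x - y)"
  using inK_add[of x "-y"] by simp

lemma al_sq: "al^2 = - al - of_rat M" using al_eq by (simp add: algebra_simps eq_neg_iff_add_eq_0)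

lemma inK_mult[simp]: "inK x \<Longrightarrow> inK y \<Longrightarrow> inK (x * y)"
proof -
  assume "inK x" "inK y"
  then obtain a b c d where x: "x = of_rat a + of_rat b * al" and y: "y = of_rat c + of_rat d * al"
    unfolding inK_def by blast
  have "x * y = of_rat a * of_rat c + (of_rat a * of_rat d + of_rat b * of_rat c) * al + of_rat b * of_rat d * al^2"
    unfolding x y by (simp add: algebra_simps power2_eq_square)
  also have "\<dots> = of_rat (a*c - b*d*M) + of_rat (a*d + b*c - b*d) * al"
    unfolding al_sq by (simp add: of_rat_mult of_rat_add of_rat_diff algebra_simps)
  finally show ?thesis unfolding inK_def by blast
qed

lemma inK_power[simp]: "inK x \<Longrightarrow> inK (x ^ n)"
  by (induction n) simp_all

lemma inK_eq0: "of_rat a + of_rat b * al = 0 \<Longrightarrow> a = 0 \<and> b = 0"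
proof -
  assume h: "of_rat a + of_rat b * al = 0"
  hence "Im (of_rat a + of_rat b * al) = 0" by simp
  hence "of_rat b * Im al = 0" by (simp add: cof)
  hence b: "b = 0" using al_nr by simp
  with h have "a = 0" by simp
  with b show ?thesis by simp
qed

lemma inK_inverse[simp]: "inK x \<Longrightarrow> inK (inverse x)"
proof -
  assume "inK x"
  then obtain a b where x: "x = of_rat a + of_rat b * al" unfolding inK_def by blast
  show ?thesis
  proof (cases "x = 0")
    case True thus ?thesis by simp
  next
    case False
    define N where "N = a^2 - a*b + b^2 * M"
    have prod: "x * (of_rat (a - b) + of_rat (-b) * al) = of_rat N"
    proof -
      have "x * (of_rat (a - b) + of_rat (-b) * al) = of_rat a * of_rat a - of_rat a * of_rat b - of_rat b * of_rat b * (al + al^2)"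
        unfolding x by (simp add: of_rat_diff of_rat_minus algebra_simps power2_eq_square)
      also have "\<dots> = of_rat N" unfolding N_def al_sq by (simp add: of_rat_diff of_rat_add of_rat_mult algebra_simps power2_eq_square)
      finally show ?thesis .
    qed
    have "of_rat (a - b) + of_rat (-b) * al \<noteq> 0"
    proof
      assume "of_rat (a - b) + of_rat (-b) * al = 0"
      hence "a - b = 0 \<and> -b = 0" by (rule inK_eq0)
      hence "x = 0" unfolding x by simp
      with False show False by simp
    qed
    hence N0: "N \<noteq> 0" using prod False by auto
    have "inverse x = (of_rat (a - b) + of_rat (-b) * al) / of_rat N"
      using prod N0 False by (simp add: field_simps)
    also have "\<dots> = of_rat ((a - b)/N) + of_rat (-b/N) * al"
      by (simp add: of_rat_divide of_rat_minus of_rat_diff add_divide_distrib diff_divide_distrib)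
    finally show ?thesis unfolding inK_def by blast
  qed
qed

lemma inK_divide[simp]: "inK x \<Longrightarrow> inK y \<Longrightarrow> inK (x / y)"
  by (simp add: divide_inverse)

lemma inK_sum[simp]: "(\<And>i. i \<in> A \<Longrightarrow> inK (f i)) \<Longrightarrow> inK (sum f A)"
  by (induction A rule: infinite_finite_induct) simp_all

lemma inK_prod[simp]: "(\<And>i. i \<in> A \<Longrightarrow> inK (f i)) \<Longrightarrow> inK (prod f A)"
  by (induction A rule: infinite_finite_induct) simp_all

definition inKp :: "complex poly \<Rightarrow> bool" where
  "inKp p \<longleftrightarrow> (\<forall>i. inK (coeff p i))"

lemma inKp_0[simp]: "inKp 0" by (simp add: inKp_def)
lemma inKp_add[simp]: "inKp p \<Longrightarrow> inKp q \<Longrightarrow> inKp (p + q)" by (simp add: inKp_def)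
lemma inKp_diff[simp]: "inKp p \<Longrightarrow> inKp q \<Longrightarrow> inKp (p - q)" by (simp add: inKp_def)
lemma inKp_uminus[simp]: "inKp p \<Longrightarrow> inKp (- p)" by (simp add: inKp_def)
lemma inKp_monom[simp]: "inK c \<Longrightarrow> inKp (monom c n)" by (simp add: inKp_def coeff_monom)
lemma inKp_const[simp]: "inK c \<Longrightarrow> inKp [:c:]" by (simp add: inKp_def coeff_pCons split: nat.split)
lemma inKp_pCons[simp]: "inK c \<Longrightarrow> inKp p \<Longrightarrow> inKp (pCons c p)" by (simp add: inKp_def coeff_pCons split: nat.split)
lemma inKp_1[simp]: "inKp 1" by (simp add: inKp_def coeff_1)
lemma inKp_mult[simp]: "inKp p \<Longrightarrow> inKp q \<Longrightarrow> inKp (p * q)" by (simp add: inKp_def coeff_mult)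
lemma inKp_smult[simp]: "inK c \<Longrightarrow> inKp p \<Longrightarrow> inKp (smult c p)" by (simp add: inKp_def)
lemma inKp_power[simp]: "inKp p \<Longrightarrow> inKp (p ^ n)" by (induction n) simp_all
lemma inKp_sum[simp]: "(\<And>i. i \<in> A \<Longrightarrow> inKp (f i)) \<Longrightarrow> inKp (sum f A)"
  by (induction A rule: infinite_finite_induct) simp_all

lemma Kdiv:
  assumes "inKp q" "inKp r" "r \<noteq> 0"
  shows "\<exists>d s. q = d * r + s \<and> inKp d \<and> inKp s \<and> (s = 0 \<or> degree s < degree r)"
  using assms(1)
proof (induction "degree q" arbitrary: q rule: less_induct)
  case less
  show ?case
  proof (cases "q = 0 \<or> degree q < degree r")
    case True
    thus ?thesis using less.prems by (intro exI[of _ 0] exI[of _ q]) auto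
  next
    case False
    hence q0: "q \<noteq> 0" and dg: "degree r \<le> degree q" by auto
    define k where "k = degree q - degree r"
    define c where "c = lead_coeff q / lead_coeff r"
    have c0: "c \<noteq> 0" using q0 assms(3) by (simp add: c_def)
    have cK: "inK c" using less.prems assms(2) unfolding c_def inKp_def by simp
    define q' where "q' = q - monom c k * r"
    have deg1: "degree (monom c k * r) = degree q"
      using c0 assms(3) dg by (simp add: degree_mult_eq degree_monom_eq k_def)
    have le: "degree q' \<le> degree q" unfolding q'_def by (rule degree_diff_le) (simp_all add: deg1)
    have "coeff (monom c k * r) (degree q) = c * lead_coeff r"
      using dg by (simp add: coeff_monom_mult k_def)
    hence cq: "coeff q' (degree q) = 0" using assms(3) unfolding q'_def c_def by simp
    have Kq': "inKp q'" unfolding q'_def using less.prems assms(2) cK by simp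
    show ?thesis
    proof (cases "q' = 0")
      case True
      hence "q = monom c k * r + 0" unfolding q'_def by simp
      thus ?thesis using cK by (intro exI[of _ "monom c k"] exI[of _ 0]) simp
    next
      case False
      have "degree q' \<noteq> degree q" using False cq by (metis leading_coeff_0_iff)
      hence "degree q' < degree q" using le by simp
      from less.hyps[OF this Kq'] obtain d s where ds: "q' = d * r + s" "inKp d" "inKp s" "s = 0 \<or> degree s < degree r"
        by blast
      have "q = (d + monom c k) * r + s" using ds(1) unfolding q'_def by (simp add: algebra_simps)
      thus ?thesis using ds cK by (intro exI[of _ "d + monom c k"] exI[of _ s]) simp
    qed
  qed
qed

end

definition alph :: "nat \<Rightarrow> int \<Rightarrow> complex" where
  "alph p m = (-1 + \<i> * complex_of_real (sqrt (4 * real_of_int (m^p) - 1))) / 2"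

lemma alph_props:
  assumes "m \<ge> 2"
  shows "(alph p m)^2 + alph p m + of_int (m^p) = 0"
    and "Im (alph p m) > 0"
    and "cnj (alph p m) = -1 - alph p m"
    and "alph p m * cnj (alph p m) = of_int (m^p)"
proof -
  have mp: "real_of_int (m^p) \<ge> 1" using assms by simp
  define s where "s = sqrt (4 * real_of_int (m^p) - 1)"
  have s2: "s^2 = 4 * real_of_int (m^p) - 1" unfolding s_def using mp by simp
  have s0: "s > 0" unfolding s_def using mp by simp
  have a: "alph p m = (-1 + \<i> * complex_of_real s) / 2" unfolding alph_def s_def ..
  have s2c: "(complex_of_real s)^2 = 4 * of_int (m^p) - 1"
    using arg_cong[OF s2, of complex_of_real] by simp
  have e: "(alph p m)^2 + alph p m + of_int (m^p) = (4 * of_int (m^p) - 1 - (complex_of_real s)^2) / 4"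
    unfolding a by (simp add: field_simps power2_eq_square)
  show 1: "(alph p m)^2 + alph p m + of_int (m^p) = 0"
    unfolding e s2c by simp
  show "Im (alph p m) > 0" unfolding a using s0 by simp
  show c: "cnj (alph p m) = -1 - alph p m" unfolding a by (simp add: complex_eq_iff)
  show "alph p m * cnj (alph p m) = of_int (m^p)" unfolding c using 1
    by (simp add: algebra_simps power2_eq_square) (metis add.commute add_eq_0_iff2 add.left_commute)
qed

lemma fv_of_rat: "fv p m (of_rat t :: 'a::field_char_0) = of_rat (fv p m t)"
  unfolding fv_def by (simp add: of_rat_add of_rat_sum of_rat_mult of_rat_power)

lemma fv_zero: "odd p \<Longrightarrow> fv p m (0::'a::field_char_0) = 1"
proof -
  assume o: "odd p"
  have "(\<Sum>k\<le>(p - 1) div 2. (-1)^k * of_nat (cc p k) * (of_int m)^k * (0::'a)^(p - 2*k)) = 0"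
  proof (intro sum.neutral ballI)
    fix k assume "k \<in> {..(p - 1) div 2}"
    hence "p - 2*k \<noteq> 0" using o by (auto elim!: oddE)
    thus "(-1)^k * of_nat (cc p k) * (of_int m)^k * (0::'a)^(p - 2*k) = 0" by simp
  qed
  thus ?thesis unfolding fv_def by simp
qed

lemma degree_fpoly_le: "degree (fpoly p m) \<le> p"
  unfolding fpoly_def
  by (intro degree_add_le degree_sum_le) (auto intro: order.trans[OF degree_monom_le])

lemma main_lemma:
  fixes p :: nat and m :: int and g :: "rat poly"
  assumes p: "prime p" "p \<ge> 5" and m: "m \<ge> 2"
    and gd: "g dvd fpoly p m" and dg0: "degree g > 0" and dgp: "degree g < p"
  shows False
proof -
  define F where "F = fpoly p m"
  define Fc where "Fc = map_poly (of_rat :: rat \<Rightarrow> complex) F"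
  define Gc where "Gc = map_poly (of_rat :: rat \<Rightarrow> complex) g"
  define \<alpha> where "\<alpha> = alph p m"
  have op: "odd p" using odd_p p by blast
  have p0: "p > 0" using p by simp
  note ap = alph_props[OF m, of p, folded \<alpha>_def]
  have a0: "\<alpha> \<noteq> 0" using ap(2) by auto
  have cnjne: "cnj \<alpha> \<noteq> \<alpha>" using ap(2) by (auto simp: complex_eq_iff)
  interpret qK \<alpha> "of_int (m^p)"
    by unfold_locales (use ap in \<open>auto simp: of_rat_power\<close>)
  have polyFc: "poly Fc z = fv p m z" for z unfolding Fc_def F_def by (rule poly_fpoly[OF op])
  have "fv p m (0::complex) = 1" by (rule fv_zero[OF op])
  hence Fc0: "Fc \<noteq> 0" using polyFc[of 0] by auto
  have dFc: "degree Fc \<le> p" unfolding Fc_def F_def using degree_fpoly_le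
    by (metis degree_map_poly of_rat_eq_0_iff)
  have dGc: "degree Gc = degree g" unfolding Gc_def by (rule degree_map_poly) simp
  obtain h where h: "F = g * h" using gd unfolding F_def by blast
  have FcGc: "Fc = Gc * map_poly of_rat h" unfolding Fc_def Gc_def h by (rule mp_mult)
  define R where "R = {u::complex. u^p = \<alpha>}"
  have cR: "card R = p" unfolding R_def by (rule card_nth_roots[OF a0 p0])
  have fR: "finite R" using cR p0 card.infinite by fastforce
  have R0: "u \<noteq> 0" if "u \<in> R" for u using that a0 p0 unfolding R_def by auto
  define \<phi> where "\<phi> u = u + of_int m / u" for u :: complex
  have root: "poly Fc (\<phi> u) = 0" if "u \<in> R" for u
  proof -
    have u0: "u \<noteq> 0" using R0 that .
    have "poly Fc (\<phi> u) = 1 + u^p + (of_int m / u)^p"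
      unfolding polyFc \<phi>_def using fv_dickson[OF op, of u "of_int m / u" m] p u0 by simp
    also have "(of_int m / u)^p = cnj \<alpha>"
    proof -
      have "(of_int m / u)^p = of_int (m^p) / \<alpha>" using that unfolding R_def by (simp add: power_divide)
      also have "\<dots> = cnj \<alpha>" using ap(4) a0 by (simp add: field_simps)
      finally show ?thesis .
    qed
    finally show ?thesis using that ap(3) unfolding R_def by simp
  qed
  have inj: "inj_on \<phi> R"
  proof (rule inj_onI)
    fix u v assume u: "u \<in> R" and v: "v \<in> R" and e: "\<phi> u = \<phi> v"
    have u0: "u \<noteq> 0" and v0: "v \<noteq> 0" using R0 u v by auto
    have "(u - v) * (u * v - of_int m) = 0"
      using e u0 v0 unfolding \<phi>_def by (simp add: field_simps)
    moreover have "u * v \<noteq> of_int m"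
    proof
      assume "u * v = of_int m"
      hence "(u*v)^p = of_int (m^p)" by simp
      hence "\<alpha> * \<alpha> = \<alpha> * cnj \<alpha>" using u v ap(4) unfolding R_def by (simp add: power_mult_distrib)
      thus False using a0 cnjne by simp
    qed
    ultimately show "u = v" by simp
  qed
  define Z where "Z = {z. poly Fc z = 0}"
  have fZ: "finite Z" unfolding Z_def using Fc0 poly_roots_finite by blast
  have cZ: "card Z \<le> p" unfolding Z_def using card_poly_roots_bound[OF Fc0] dFc by linarith
  have sub: "\<phi> ` R \<subseteq> Z" unfolding Z_def using root by auto
  have cimg: "card (\<phi> ` R) = p" using card_image[OF inj] cR by simp
  have ZR: "Z = \<phi> ` R" using card_subset_eq[OF fZ sub] cimg cZ card_mono[OF fZ sub] by simp
  define A where "A = {u\<in>R. poly Gc (\<phi> u) = 0}"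
  have Gc0: "Gc \<noteq> 0" using dGc dg0 by auto
  have Ane: "A \<noteq> {}"
  proof -
    have "\<not> constant (poly Gc)" unfolding constant_degree using dGc dg0 by simp
    then obtain z where z: "poly Gc z = 0" using fundamental_theorem_of_algebra by blast
    hence "z \<in> Z" unfolding Z_def FcGc by simp
    then obtain u where "u \<in> R" "z = \<phi> u" unfolding ZR by blast
    thus ?thesis using z unfolding A_def by blast
  qed
  have AR: "A \<subseteq> R" unfolding A_def by blast
  have AneR: "A \<noteq> R"
  proof
    assume "A = R"
    hence "\<phi> ` R \<subseteq> {z. poly Gc z = 0}" unfolding A_def by auto
    hence "p \<le> card {z. poly Gc z = 0}"
      using cimg card_mono[OF poly_roots_finite[OF Gc0]] by metis
    thus False using card_poly_roots_bound[OF Gc0] dGc dgp by linarith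
  qed
  define d where "d = degree g"
  define E where "E = (\<Sum>i\<le>d. smult (of_rat (coeff g i) :: complex) ([:0,1:]^(d-i) * [:of_int m, 0, 1:]^i))"
  have polyE: "poly E u = u^d * poly Gc (\<phi> u)" if u0: "u \<noteq> 0" for u :: complex
  proof -
    have "poly E u = (\<Sum>i\<le>d. of_rat (coeff g i) * (u^(d-i) * (of_int m + u * u)^i))"
      unfolding E_def by (simp add: poly_sum)
    also have "\<dots> = (\<Sum>i\<le>d. u^d * (coeff Gc i * \<phi> u ^ i))"
    proof (rule sum.cong[OF refl])
      fix i assume "i \<in> {..d}"
      hence id: "d = (d - i) + i" by simp
      have "of_int m + u * u = u * \<phi> u" unfolding \<phi>_def using u0 by (simp add: field_simps)
      hence "u^(d-i) * (of_int m + u * u)^i = u^d * \<phi> u ^ i"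
        by (subst id) (simp only: power_mult_distrib power_add mult.assoc)
      thus "of_rat (coeff g i) * (u^(d-i) * (of_int m + u * u)^i) = u^d * (coeff Gc i * \<phi> u ^ i)"
        unfolding Gc_def by (simp add: coeff_map_poly)
    qed
    also have "\<dots> = u^d * poly Gc (\<phi> u)"
      unfolding poly_altdef dGc d_def by (simp add: sum_distrib_left)
    finally show ?thesis .
  qed
  have KE: "inKp E" unfolding E_def by (intro inKp_sum inKp_smult inKp_mult inKp_power) auto
  define Xp where "Xp = monom 1 p - [:\<alpha>:]"
  have polyXp: "poly Xp z = z^p - \<alpha>" for z unfolding Xp_def by (simp add: poly_monom)
  have KX: "inKp Xp" unfolding Xp_def by simp
  have Xp0: "Xp \<noteq> 0" using polyXp[of 0] a0 p0 by auto
  have Evan: "poly E u = 0 \<longleftrightarrow> u \<in> A" if "u \<in> R" for u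
    using that R0[OF that] unfolding polyE[OF R0[OF that]] A_def by simp
  obtain u0 where u0: "u0 \<in> R" "u0 \<notin> A" using AR AneR by blast
  have E0: "E \<noteq> 0" using Evan[OF u0(1)] u0(2) by auto
  define S where "S = {r. r \<noteq> 0 \<and> inKp r \<and> (\<forall>a\<in>A. poly r a = 0)}"
  have XS: "Xp \<in> S" unfolding S_def using Xp0 KX AR polyXp unfolding R_def by auto
  have ES: "E \<in> S" unfolding S_def using E0 KE Evan AR by auto
  obtain r where rS: "r \<in> S" and rmin: "\<And>q. q \<in> S \<Longrightarrow> degree r \<le> degree q"
    using ex_has_least_nat[of "\<lambda>q. q \<in> S" Xp degree] XS by blast
  have r0: "r \<noteq> 0" and Kr: "inKp r" and rv: "\<And>a. a \<in> A \<Longrightarrow> poly r a = 0" using rS unfolding S_def by auto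
  have rdvd: "r dvd q" if "q \<in> S" for q
  proof -
    have Kq: "inKp q" and qv: "\<And>a. a \<in> A \<Longrightarrow> poly q a = 0" using that unfolding S_def by auto
    obtain dd s where ds: "q = dd * r + s" "inKp s" "s = 0 \<or> degree s < degree r"
      using Kdiv[OF Kq Kr r0] by blast
    have sv: "poly s a = 0" if "a \<in> A" for a
      using arg_cong[OF ds(1), of "\<lambda>x. poly x a"] qv[OF that] rv[OF that] by simp
    have "s = 0"
    proof (rule ccontr)
      assume "s \<noteq> 0"
      hence "s \<in> S" unfolding S_def using ds(2) sv by auto
      hence "degree r \<le> degree s" by (rule rmin)
      thus False using ds(3) \<open>s \<noteq> 0\<close> by simp
    qed
    thus ?thesis using ds(1) by simp
  qed
  have rroots: "{z. poly r z = 0} = A"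
  proof
    show "{z. poly r z = 0} \<subseteq> A"
    proof
      fix z assume "z \<in> {z. poly r z = 0}"
      hence rz: "poly r z = 0" by simp
      from rdvd[OF XS] obtain k1 where "Xp = r * k1" by (elim dvdE)
      hence "poly Xp z = 0" using rz by simp
      hence zR: "z \<in> R" unfolding R_def polyXp by simp
      from rdvd[OF ES] obtain k2 where "E = r * k2" by (elim dvdE)
      hence "poly E z = 0" using rz by simp
      thus "z \<in> A" using Evan[OF zR] by simp
    qed
    show "A \<subseteq> {z. poly r z = 0}" using rv by auto
  qed
  have sqXp: "rsquarefree Xp"
    unfolding rsquarefree_roots
  proof (intro allI notI)
    fix a assume h: "poly Xp a = 0 \<and> poly (pderiv Xp) a = 0"
    have "pderiv Xp = monom (of_nat p) (p - 1)" unfolding Xp_def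
      by (simp add: pderiv_diff pderiv_monom pderiv_pCons)
    hence "of_nat p * a^(p-1) = 0" using h by (simp add: poly_monom)
    hence "a = 0" using p0 by simp
    thus False using h polyXp[of a] a0 p0 by (auto simp: power_0_left)
  qed
  have sqr: "rsquarefree r"
    unfolding rsquarefree_def
  proof (intro conjI allI r0)
    fix a
    have "order a r \<le> order a Xp" by (rule dvd_imp_order_le[OF Xp0 rdvd[OF XS]])
    moreover have "order a Xp = 0 \<or> order a Xp = 1" using sqXp unfolding rsquarefree_def by blast
    ultimately show "order a r = 0 \<or> order a r = 1" by auto
  qed
  have rdec: "smult (lead_coeff r) (\<Prod>z\<in>A. [:-z,1:]) = r"
    using complex_poly_decompose_rsquarefree[OF sqr] unfolding rroots .
  define P where "P = (\<Prod>z\<in>A. z)"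
  have fA: "finite A" using fR AR finite_subset by blast
  have cr0: "coeff r 0 = lead_coeff r * ((-1)^card A * P)"
  proof -
    have "coeff r 0 = poly r 0" by (simp add: poly_0_coeff_0)
    also have "\<dots> = lead_coeff r * (\<Prod>z\<in>A. - z)"
      by (subst rdec[symmetric]) (simp add: poly_prod)
    also have "(\<Prod>z\<in>A. - z) = (-1)^card A * P" unfolding P_def by (rule prod_uminus)
    finally show ?thesis .
  qed
  have PK: "inK P"
  proof -
    have l0: "lead_coeff r \<noteq> 0" using r0 by simp
    have "P = coeff r 0 / (lead_coeff r * (-1)^card A)" using cr0 l0 by (simp add: field_simps)
    thus ?thesis using Kr unfolding inKp_def by simp
  qed
  define dA where "dA = card A"
  have dA0: "dA > 0" unfolding dA_def using fA Ane by (simp add: card_gt_0_iff)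
  have dAp: "dA < p" unfolding dA_def cR[symmetric] using AR AneR fR by (simp add: psubset_card_mono)
  have Pp: "P^p = \<alpha>^dA"
  proof -
    have "P^p = (\<Prod>z\<in>A. z^p)" unfolding P_def by (rule prod_power_distrib)
    also have "\<dots> = (\<Prod>z\<in>A. \<alpha>)" using AR unfolding R_def by (intro prod.cong) auto
    finally show ?thesis unfolding dA_def by simp
  qed
  have "\<not> p dvd dA" using dA0 dAp by (auto dest: dvd_imp_le)
  hence "coprime p dA" using p(1) by (intro prime_imp_coprime) auto
  hence g1: "gcd dA p = 1" by (simp add: coprime_iff_gcd_eq_1 gcd.commute)
  obtain x y where xy: "dA * x = p * y + 1" using bezout_nat[of dA p] dA0 g1 by auto
  define Q where "Q = P^x / \<alpha>^y"
  have QK: "inK Q" unfolding Q_def using PK by simp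
  have Qp: "Q^p = \<alpha>"
  proof -
    have "Q^p = (P^p)^x / (\<alpha>^(p*y))" unfolding Q_def by (simp add: power_divide power_mult[symmetric] mult.commute)
    also have "(P^p)^x = \<alpha>^(p*y) * \<alpha>" unfolding Pp power_mult[symmetric] xy by simp
    finally show ?thesis using a0 by simp
  qed
  obtain a b where Qab: "Q = of_rat a + of_rat b * \<alpha>" using QK unfolding inK_def by blast
  have cQ: "cnj Q = of_rat a + of_rat b * cnj \<alpha>" unfolding Qab by (simp add: cof)
  have sumQ: "Q + cnj Q = of_rat (2*a - b)"
    unfolding cQ ap(3) unfolding Qab by (simp add: of_rat_diff of_rat_mult algebra_simps)
  have QQ: "Q * cnj Q = of_int m"
  proof -
    define n where "n = (cmod Q)^2"
    have n0: "n \<ge> 0" unfolding n_def by simp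
    have "complex_of_real (n^p) = (Q * cnj Q)^p" unfolding n_def by (subst of_real_power) (simp only: complex_norm_square)
    also have "\<dots> = \<alpha> * cnj \<alpha>" by (simp add: power_mult_distrib Qp flip: complex_cnj_power)
    also have "\<dots> = complex_of_real (real_of_int m ^ p)" using ap(4) by simp
    finally have "n^p = real_of_int m ^ p" by (simp only: of_real_eq_iff)
    moreover have "0 \<le> real_of_int m" using m by simp
    ultimately have "n = real_of_int m" using power_eq_imp_eq_base n0 p0 by blast
    thus ?thesis unfolding complex_norm_square[symmetric] n_def[symmetric] by simp
  qed
  have "fv p m (Q + cnj Q) = 1 + Q^p + (cnj Q)^p" by (rule fv_dickson[OF op _ QQ]) (use p in simp)
  also have "\<dots> = 0" using Qp ap(3) by (simp flip: complex_cnj_power)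
  finally have "(of_rat (fv p m (2*a - b)) :: complex) = 0" unfolding sumQ fv_of_rat .
  hence "fv p m (2*a - b) = 0" by simp
  thus False using fv_nonzero[OF p m] by blast
qed

lemma coeff_fpoly_p: assumes "p > 0" shows "coeff (fpoly p m) p = 1"
proof -
  define c where "c k = (-1) ^ k * (of_nat p / of_nat (p - k)) * of_nat ((p - k) choose k) * (of_int m :: rat) ^ k" for k
  have F: "fpoly p m = 1 + (\<Sum>k = 0..(p - 1) div 2. monom (c k) (p - 2 * k))"
    unfolding fpoly_def c_def ..
  have c1: "coeff (1::rat poly) p = 0" using assms by (simp add: coeff_1)
  have "coeff (fpoly p m) p = (\<Sum>k = 0..(p - 1) div 2. coeff (monom (c k) (p - 2 * k)) p)"
    unfolding F coeff_add coeff_sum c1 by simp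
  also have "\<dots> = (\<Sum>k = 0..(p - 1) div 2. (if k = 0 then c k else 0))"
  proof (rule sum.cong[OF refl])
    fix k
    have "(p - 2 * k = p) \<longleftrightarrow> k = 0" using assms by auto
    thus "coeff (monom (c k) (p - 2 * k)) p = (if k = 0 then c k else 0)"
      unfolding coeff_monom by simp
  qed
  also have "\<dots> = c 0" by (subst sum.delta) auto
  also have "c 0 = 1" unfolding c_def using assms by simp
  finally show ?thesis .
qed

theorem mainTheorem15:
  fixes p :: nat and m :: int
  assumes "prime p" and "p \<ge> 5" and "m \<ge> 2"
  shows "irreducible (fpoly p m)"
proof -
  have p0: "p > 0" using assms by simp
  have dF: "degree (fpoly p m) = p"
    using degree_fpoly_le[of p m] le_degree[of "fpoly p m" p] coeff_fpoly_p[OF p0, of m] by simp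
  have F0: "fpoly p m \<noteq> 0" using dF p0 by auto
  show ?thesis
  proof (rule irreducibleI[OF F0])
    show "\<not> fpoly p m dvd 1" using is_unit_iff_degree[OF F0] dF p0 by simp
  next
    fix a b assume ab: "fpoly p m = a * b"
    show "a dvd 1 \<or> b dvd 1"
    proof (rule ccontr)
      assume "\<not> (a dvd 1 \<or> b dvd 1)"
      hence na: "\<not> a dvd 1" and nb: "\<not> b dvd 1" by auto
      have a0: "a \<noteq> 0" and b0: "b \<noteq> 0" using F0 ab by auto
      have da: "degree a > 0" using is_unit_iff_degree[OF a0] na by simp
      have db: "degree b > 0" using is_unit_iff_degree[OF b0] nb by simp
      have "degree a + degree b = p" using dF ab degree_mult_eq[OF a0 b0] by simp
      hence "degree a < p" using db by simp
      moreover have "a dvd fpoly p m" using ab by simp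
      ultimately show False using main_lemma[OF assms] da by blast
    qed
  qed
qed


end
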